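(* For $2\le k\le n$, $$d(n,k-1)=\sum_{a=1}^{k-1}\binom{k-1}{a}\,d(a,a)\,d(n-a,k-a).$$
   Context: A decreasing planar tree on a finite set $V\subseteq\mathbb N$ is a rooted planar tree (children of each node totally ordered) with node set $V$ such that every node is larger than all of its descendants (so the root is $\max V$). For such a tree $T$, $L(T)$ is the largest leaf of $T$. For $n\ge1$, $d(n,k)$ denotes the number of decreasing planar trees $T$ on $[1,n]$ with $L(T)\le k$ (so $d(n,k)=0$ if $k\notin[1,n]$, and $d(1,1)=1$). *)

theory Defs
  imports Main
begin

datatype ptree = Node nat "ptree list"

fun labels :: "ptree \<Rightarrow> nat list" where
  "labels (Node v ts) = v # concat (map labels ts)"

fun decreasing :: "ptree \<Rightarrow> bool" where
  "decreasing (Node v ts) =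
     (\<forall>t\<in>set ts. decreasing t \<and> (\<forall>u\<in>set (labels t). u < v))"

fun leaves :: "ptree \<Rightarrow> nat list" where
  "leaves (Node v ts) = (if ts = [] then [v] else concat (map leaves ts))"

definition largest_leaf :: "ptree \<Rightarrow> nat" where
  "largest_leaf T = Max (set (leaves T))"

definition dec_planar_trees :: "nat set \<Rightarrow> ptree set" where
  "dec_planar_trees V =
     {T. decreasing T \<and> distinct (labels T) \<and> set (labels T) = V}"

text \<open>d(n,k): number of decreasing planar trees on [1,n] with L(T) \<le> k;
by convention 0 when k is not in [1,n].\<close>
definition d :: "nat \<Rightarrow> nat \<Rightarrow> nat" where
  "d n k = (if 1 \<le> k \<and> k \<le> n
            then card {T \<in> dec_planar_trees {1..n}. largest_leaf T \<le> k}
            else 0)"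

end

theory Submission
  imports Defs "HOL-Library.Multiset"
begin

lemma labels_ne: "labels T \<noteq> []"
  by (cases T) auto

lemma leaves_ne: "leaves T \<noteq> []"
proof (induction T)
  case (Node v ts)
  then show ?case by (cases ts) auto
qed

lemma leaves_sub: "set (leaves T) \<subseteq> set (labels T)"
  by (induction T) auto

lemma L_mem: "largest_leaf T \<in> set (leaves T)"
  unfolding largest_leaf_def using leaves_ne by (intro Max_in) auto

lemma L_le_iff: "largest_leaf T \<le> x \<longleftrightarrow> (\<forall>u\<in>set (leaves T). u \<le> x)"
  unfolding largest_leaf_def using leaves_ne by (subst Max_le_iff) auto

section \<open>Relabelling\<close>

fun map_labels :: "(nat \<Rightarrow> nat) \<Rightarrow> ptree \<Rightarrow> ptree" where
  "map_labels h (Node v ts) = Node (h v) (map (map_labels h) ts)"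

lemma labels_map: "labels (map_labels h T) = map h (labels T)"
  by (induction T) (auto simp: map_concat intro!: arg_cong[where f=concat] map_cong)

lemma leaves_map: "leaves (map_labels h T) = map h (leaves T)"
  by (induction T) (auto simp: map_concat intro!: arg_cong[where f=concat] map_cong)

lemma map_labels_comp: "map_labels g (map_labels h T) = map_labels (g \<circ> h) T"
  by (induction T) auto

lemma map_labels_id: "(\<forall>x\<in>set (labels T). f x = x) \<Longrightarrow> map_labels f T = T"
  by (induction T) (auto intro: map_idI)

lemma decreasing_map:
  "(\<forall>x\<in>set (labels T). \<forall>y\<in>set (labels T). (x < y) = (h x < h y))
   \<Longrightarrow> decreasing (map_labels h T) = decreasing T"
proof (induction T)
  case (Node v ts)
  have "decreasing (map_labels h t) = decreasing t" if "t \<in> set ts" for t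
    using Node that by auto
  moreover have "(\<forall>u\<in>set (labels t). h u < h v) = (\<forall>u\<in>set (labels t). u < v)"
    if "t \<in> set ts" for t
    using Node.prems that by auto
  ultimately show ?case by (auto simp: labels_map)
qed

lemma Max_mono_image:
  assumes "finite S" "S \<noteq> {}" "\<forall>x\<in>S. \<forall>y\<in>S. (x < y) = (h x < (h y::nat))"
  shows "Max (h ` S) = h (Max (S::nat set))"
proof (rule Max_eqI)
  show "finite (h ` S)" using assms by auto
  show "h (Max S) \<in> h ` S" using assms by auto
  fix y assume "y \<in> h ` S"
  then obtain z where z: "z \<in> S" "y = h z" by auto
  have "z \<le> Max S" using z assms by auto
  moreover have "Max S \<in> S" using assms by auto
  ultimately show "y \<le> h (Max S)" using z assms
    by (metis le_eq_less_or_eq)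
qed

lemma L_map:
  assumes "\<forall>x\<in>set (labels T). \<forall>y\<in>set (labels T). (x < y) = (h x < h y)"
  shows "largest_leaf (map_labels h T) = h (largest_leaf T)"
proof -
  have "largest_leaf (map_labels h T) = Max (h ` set (leaves T))"
    unfolding largest_leaf_def leaves_map by simp
  also have "\<dots> = h (Max (set (leaves T)))"
    using assms leaves_sub[of T] leaves_ne[of T]
    by (intro Max_mono_image) auto
  finally show ?thesis unfolding largest_leaf_def .
qed

lemma relabel_card:
  assumes emb: "\<forall>x\<in>V. \<forall>y\<in>V. (x < y) = (h x < h y)" and x: "x \<in> V"
  shows "card {T \<in> dec_planar_trees V. largest_leaf T \<le> x}
       = card {T \<in> dec_planar_trees (h ` V). largest_leaf T \<le> h x}"
proof -
  have inj: "inj_on h V"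
    using emb by (metis inj_onI linorder_neq_iff)
  define g where "g = the_inv_into V h"
  have gh: "g (h y) = y" if "y \<in> V" for y
    using that inj unfolding g_def by (simp add: the_inv_into_f_f)
  have emb2: "\<forall>x\<in>h ` V. \<forall>y\<in>h ` V. (x < y) = (g x < g y)"
    using emb gh by auto
  let ?A = "{T \<in> dec_planar_trees V. largest_leaf T \<le> x}"
  let ?B = "{T \<in> dec_planar_trees (h ` V). largest_leaf T \<le> h x}"
  have injf: "inj_on (map_labels h) ?A"
  proof (rule inj_onI)
    fix T1 T2 assume "T1 \<in> ?A" "T2 \<in> ?A" and eq: "map_labels h T1 = map_labels h T2"
    then have s: "set (labels T1) = V" "set (labels T2) = V"
      by (auto simp: dec_planar_trees_def)
    have "T1 = map_labels g (map_labels h T1)"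
      by (simp add: map_labels_comp map_labels_id gh s)
    also have "\<dots> = map_labels g (map_labels h T2)" using eq by simp
    also have "\<dots> = T2" by (simp add: map_labels_comp map_labels_id gh s)
    finally show "T1 = T2" .
  qed
  have img: "map_labels h ` ?A = ?B"
  proof
    show "map_labels h ` ?A \<subseteq> ?B"
    proof
      fix T' assume "T' \<in> map_labels h ` ?A"
      then obtain T where T: "T \<in> ?A" "T' = map_labels h T" by auto
      then have s: "set (labels T) = V" "decreasing T" "distinct (labels T)"
        "largest_leaf T \<le> x"
        by (auto simp: dec_planar_trees_def)
      have "distinct (labels T')" using T s inj by (simp add: labels_map distinct_map)
      moreover have "decreasing T'" using T s emb by (simp add: decreasing_map)
      moreover have "set (labels T') = h ` V" using T s by (simp add: labels_map)
      moreover have "largest_leaf T' \<le> h x"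
      proof -
        have "largest_leaf T \<in> V" using L_mem leaves_sub s by auto
        then show ?thesis using T s emb x L_map[of T h]
          by (metis le_eq_less_or_eq)
      qed
      ultimately show "T' \<in> ?B" by (simp add: dec_planar_trees_def)
    qed
  next
    show "?B \<subseteq> map_labels h ` ?A"
    proof
      fix T' assume T': "T' \<in> ?B"
      then have s: "set (labels T') = h ` V" "decreasing T'" "distinct (labels T')"
        "largest_leaf T' \<le> h x"
        by (auto simp: dec_planar_trees_def)
      define T where "T = map_labels g T'"
      have sT: "set (labels T) = V" using s gh unfolding T_def labels_map by force
      have "map_labels h T = T'"
      proof -
        have "\<forall>y\<in>set (labels T'). (h \<circ> g) y = y" using s(1) gh by auto
        then show ?thesis unfolding T_def map_labels_comp by (rule map_labels_id)
      qed
      moreover have "T \<in> ?A"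
      proof -
        have "inj_on g (h ` V)" using gh by (auto simp: inj_on_def)
        then have "distinct (labels T)" using s unfolding T_def
          by (simp add: labels_map distinct_map)
        moreover have "decreasing T" using s emb2 unfolding T_def by (simp add: decreasing_map)
        moreover have "largest_leaf T \<le> x"
        proof -
          have "largest_leaf T \<in> V" using L_mem leaves_sub sT by auto
          moreover have "h (largest_leaf T) \<le> h x"
            using s `map_labels h T = T'` L_map[of T h] emb sT by auto
          ultimately show ?thesis using emb x by (metis not_less)
        qed
        ultimately show ?thesis using sT by (simp add: dec_planar_trees_def)
      qed
      ultimately show "T' \<in> map_labels h ` ?A" by blast
    qed
  qed
  show ?thesis using card_image[OF injf] img by simp
qed


section \<open>Grafting and pruning\<close>

fun graft :: "nat \<Rightarrow> ptree \<Rightarrow> ptree \<Rightarrow> ptree" where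
  "graft k S (Node v ts) =
     (if v = k then Node v (S # map (graft k S) ts) else Node v (map (graft k S) ts))"

fun prune :: "nat \<Rightarrow> ptree \<Rightarrow> ptree" where
  "prune k (Node v []) = Node v []"
| "prune k (Node v (t # ts)) =
     (if v = k then Node v (map (prune k) ts) else Node v (prune k t # map (prune k) ts))"

fun extr :: "nat \<Rightarrow> ptree \<Rightarrow> ptree list" where
  "extr k (Node v []) = []"
| "extr k (Node v (t # ts)) =
     (if v = k then t # concat (map (extr k) ts)
      else extr k t @ concat (map (extr k) ts))"

lemma graft_notin: "k \<notin> set (labels T) \<Longrightarrow> graft k S T = T"
  by (induction T) (auto intro: map_idI)

lemma prune_notin: "k \<notin> set (labels T) \<Longrightarrow> prune k T = T"
proof (induction k T rule: prune.induct)
  case (2 k v t ts)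
  then show ?case by (auto intro: map_idI)
qed simp

lemma extr_notin: "k \<notin> set (labels T) \<Longrightarrow> extr k T = []"
proof (induction k T rule: extr.induct)
  case (2 k v t ts)
  then show ?case by auto
qed simp

lemma prune_graft: "prune k (graft k S T) = T"
proof (induction T)
  case (Node v ts)
  show ?case
  proof (cases ts)
    case Nil then show ?thesis by simp
  next
    case (Cons t ts')
    then show ?thesis using Node by (auto intro: map_idI)
  qed
qed

lemma mset_labels_prune:
  "mset (labels T) = mset (labels (prune k T)) + mset (concat (map labels (extr k T)))"
proof (induction k T rule: prune.induct)
  case (1 k v)
  then show ?case by simp
next
  case (2 k v t ts)
  have IH: "\<And>u. u \<in> set ts \<Longrightarrow> mset (labels u) =
      mset (labels (prune k u)) + mset (concat (map labels (extr k u)))"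
    using 2 by auto
  have sum: "mset (concat (map labels ts)) =
      mset (concat (map labels (map (prune k) ts))) +
      mset (concat (map labels (concat (map (extr k) ts))))"
    using IH by (induction ts) auto
  show ?case
  proof (cases "v = k")
    case True
    then show ?thesis using sum by simp
  next
    case False
    then show ?thesis using sum 2 by simp
  qed
qed


lemma extr_nonk: "v \<noteq> k \<Longrightarrow> extr k (Node v ts) = concat (map (extr k) ts)"
  by (cases ts) auto

lemma prune_nonk: "v \<noteq> k \<Longrightarrow> prune k (Node v ts) = Node v (map (prune k) ts)"
  by (cases ts) auto

lemma extr_k: "extr k (Node k ts) = take 1 ts @ concat (map (extr k) (tl ts))"
  by (cases ts) auto

lemma prune_k: "prune k (Node k ts) = Node k (map (prune k) (tl ts))"
  by (cases ts) auto

lemma split_child: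
  assumes "distinct (concat (map labels ts))" "k \<in> set (labels t)" "t \<in> set ts"
  obtains xs ys where "ts = xs @ t # ys" "\<forall>u\<in>set xs. k \<notin> set (labels u)"
    "\<forall>u\<in>set ys. k \<notin> set (labels u)"
proof -
  obtain xs ys where ts: "ts = xs @ t # ys" using split_list[OF assms(3)] by blast
  have "\<forall>u\<in>set xs. k \<notin> set (labels u)" "\<forall>u\<in>set ys. k \<notin> set (labels u)"
    using assms(1,2) unfolding ts by (auto simp: distinct_append)
  then show ?thesis using that ts by blast
qed

lemma extr_graft:
  "k \<notin> set (labels S) \<Longrightarrow> distinct (labels T) \<Longrightarrow>
   extr k (graft k S T) = (if k \<in> set (labels T) then [S] else [])"
proof (induction T)
  case (Node v ts)
  show ?case
  proof (cases "v = k")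
    case True
    then have "\<forall>u\<in>set ts. k \<notin> set (labels u)" using Node.prems by auto
    then have "map (graft k S) ts = ts" "\<forall>u\<in>set ts. extr k u = []"
      by (auto intro: map_idI graft_notin extr_notin)
    then show ?thesis using True by simp
  next
    case False
    show ?thesis
    proof (cases "k \<in> set (labels (Node v ts))")
      case True
      with False obtain t where t: "t \<in> set ts" "k \<in> set (labels t)" by auto
      from Node.prems have dc: "distinct (concat (map labels ts))" by simp
      obtain xs ys where xs: "ts = xs @ t # ys" "\<forall>u\<in>set xs. k \<notin> set (labels u)"
        "\<forall>u\<in>set ys. k \<notin> set (labels u)" using split_child[OF dc t(2) t(1)] by blast
      have ih: "extr k (graft k S t) = [S]"
        using Node.IH[OF t(1)] Node.prems t xs by auto
      have "map (graft k S) xs = xs" "map (graft k S) ys = ys"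
        using xs by (auto intro: map_idI graft_notin)
      moreover have e: "concat (map (extr k) xs) = []" "concat (map (extr k) ys) = []"
        using xs by (auto simp: extr_notin)
      ultimately have "extr k (graft k S (Node v ts)) = [S]"
        using False ih xs(1) by (simp del: concat_eq_Nil_conv add: extr_nonk e)
      then show ?thesis using True by simp
    next
      case nt: False
      then show ?thesis by (simp add: graft_notin extr_notin)
    qed
  qed
qed

lemma decomp:
  "distinct (labels T) \<Longrightarrow> k \<in> set (labels T) \<Longrightarrow> k \<notin> set (leaves T) \<Longrightarrow>
   \<exists>S. extr k T = [S] \<and> graft k S (prune k T) = T"
proof (induction T)
  case (Node v ts)
  show ?case
  proof (cases "v = k")
    case True
    then obtain t ts' where ts: "ts = t # ts'" using Node.prems by (cases ts) auto
    then have "\<forall>u\<in>set ts'. k \<notin> set (labels u)" using Node.prems True by auto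
    then have "map (prune k) ts' = ts'" "\<forall>u\<in>set ts'. extr k u = []"
      "map (graft k t) ts' = ts'"
      by (auto intro: map_idI graft_notin extr_notin prune_notin)
    then show ?thesis using True ts by simp
  next
    case False
    with Node.prems obtain t where t: "t \<in> set ts" "k \<in> set (labels t)" by auto
    then have ne: "ts \<noteq> []" by auto
    from Node.prems have dc: "distinct (concat (map labels ts))" by simp
    obtain xs ys where xs: "ts = xs @ t # ys" "\<forall>u\<in>set xs. k \<notin> set (labels u)"
      "\<forall>u\<in>set ys. k \<notin> set (labels u)" using split_child[OF dc t(2) t(1)] by blast
    have "k \<notin> set (leaves t)" using Node.prems t ne by auto
    then obtain S where S: "extr k t = [S]" "graft k S (prune k t) = t"
      using Node.IH[OF t(1)] Node.prems t xs by auto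
    have "map (prune k) xs = xs" "map (prune k) ys = ys"
      using xs by (auto intro: map_idI prune_notin)
    moreover have "map (graft k S) xs = xs" "map (graft k S) ys = ys"
      using xs by (auto intro: map_idI graft_notin)
    moreover have e: "concat (map (extr k) xs) = []" "concat (map (extr k) ys) = []"
      using xs by (auto simp: extr_notin)
    ultimately have "extr k (Node v ts) = [S] \<and> graft k S (prune k (Node v ts)) = Node v ts"
      using False S xs(1) by (simp del: concat_eq_Nil_conv add: extr_nonk prune_nonk e)
    then show ?thesis by blast
  qed
qed

lemma labels_graft_sub: "set (labels (graft k S T)) \<subseteq> set (labels T) \<union> set (labels S)"
  by (induction T) auto

lemma decreasing_graft:
  "decreasing T \<Longrightarrow> decreasing S \<Longrightarrow> \<forall>u\<in>set (labels S). u < k \<Longrightarrow>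
   decreasing (graft k S T)"
proof (induction T)
  case (Node v ts)
  have ch: "decreasing (graft k S t) \<and> (\<forall>u\<in>set (labels (graft k S t)). u < v)"
    if t: "t \<in> set ts" for t
  proof (cases "k \<in> set (labels t)")
    case True
    have "decreasing t" "\<forall>u\<in>set (labels t). u < v" using Node.prems t by auto
    then have "k < v" using True by auto
    then show ?thesis using Node.IH[OF t] Node.prems t labels_graft_sub[of k S t] by fastforce
  next
    case False
    then show ?thesis using Node.prems t by (simp add: graft_notin)
  qed
  show ?case
  proof (cases "v = k")
    case True
    then show ?thesis using ch Node.prems by auto
  next
    case False
    then show ?thesis using ch by auto
  qed
qed

lemma leaves_graft:
  "set (leaves (graft k S T)) \<subseteq> (set (leaves T) - {k}) \<union> set (leaves S)"
proof (induction T)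
  case (Node v ts)
  show ?case
  proof (cases "v = k")
    case True
    then show ?thesis using Node leaves_ne[of S] by auto
  next
    case False
    then show ?thesis using Node by (cases "ts = []") auto
  qed
qed

lemma labels_prune_sub: "set (labels (prune k T)) \<subseteq> set (labels T)"
  using mset_labels_prune[of T k] by (metis Un_upper1 set_mset_mset set_mset_union)

lemma decreasing_prune: "decreasing T \<Longrightarrow> decreasing (prune k T)"
proof (induction k T rule: prune.induct)
  case (1 k v)
  then show ?case by simp
next
  case (2 k v t ts)
  then show ?case using labels_prune_sub by fastforce
qed

lemma leaves_prune: "set (leaves (prune k T)) \<subseteq> set (leaves T) \<union> {k}"
proof (induction k T rule: prune.induct)
  case (1 k v)
  then show ?case by simp
next
  case (2 k v t ts)
  then show ?case by (cases "v = k"; cases "ts = []") auto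
qed

lemma extr_props:
  "decreasing T \<Longrightarrow> S \<in> set (extr k T) \<Longrightarrow> decreasing S \<and> (\<forall>u\<in>set (labels S). u < k)"
proof (induction k T rule: extr.induct)
  case (1 k v)
  then show ?case by simp
next
  case (2 k v t ts)
  then show ?case by (cases "v = k") auto
qed


section \<open>Finiteness and rank relabelling\<close>

lemma len_children: "length ts \<le> length (concat (map labels ts))"
proof (induction ts)
  case (Cons t ts)
  then show ?case using labels_ne[of t] by (cases "labels t") auto
qed simp

lemma len_child: "t \<in> set ts \<Longrightarrow> length (labels t) \<le> length (concat (map labels ts))"
  by (induction ts) auto

lemma finite_B: "finite V \<Longrightarrow> finite {T. set (labels T) \<subseteq> V \<and> length (labels T) \<le> m}"
proof (induction m)
  case 0
  have "{T. set (labels T) \<subseteq> V \<and> length (labels T) \<le> 0} = {}"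
    using labels_ne by auto
  then show ?case by (metis finite.emptyI)
next
  case (Suc m)
  let ?B = "{T. set (labels T) \<subseteq> V \<and> length (labels T) \<le> m}"
  have "{T. set (labels T) \<subseteq> V \<and> length (labels T) \<le> Suc m}
     \<subseteq> (\<lambda>(v, ts). Node v ts) ` (V \<times> {ts. set ts \<subseteq> ?B \<and> length ts \<le> m})"
  proof
    fix T assume T: "T \<in> {T. set (labels T) \<subseteq> V \<and> length (labels T) \<le> Suc m}"
    obtain v ts where Tv: "T = Node v ts" by (cases T)
    have l: "length (concat (map labels ts)) \<le> m" using T Tv by simp
    have "set ts \<subseteq> ?B"
    proof
      fix t assume "t \<in> set ts"
      then show "t \<in> ?B" using len_child[of t ts] l T Tv by auto
    qed
    moreover have "length ts \<le> m" using len_children[of ts] l by simp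
    moreover have "v \<in> V" using T Tv by simp
    ultimately show "T \<in> (\<lambda>(v, ts). Node v ts) ` (V \<times> {ts. set ts \<subseteq> ?B \<and> length ts \<le> m})"
      using Tv by blast
  qed
  moreover have "finite {ts. set ts \<subseteq> ?B \<and> length ts \<le> m}"
    using Suc by (intro finite_lists_length_le)
  ultimately show ?case using Suc.prems by (meson finite_SigmaI finite_imageI finite_subset)
qed

lemma finite_dec: "finite V \<Longrightarrow> finite (dec_planar_trees V)"
proof -
  assume fV: "finite V"
  have "dec_planar_trees V \<subseteq> {T. set (labels T) \<subseteq> V \<and> length (labels T) \<le> card V}"
    unfolding dec_planar_trees_def using distinct_card by fastforce
  then show ?thesis using finite_B[OF fV] finite_subset by blast
qed

definition rk :: "nat set \<Rightarrow> nat \<Rightarrow> nat" where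
  "rk V x = card {y \<in> V. y \<le> x}"

lemma rk_less: "finite V \<Longrightarrow> x \<in> V \<Longrightarrow> y \<in> V \<Longrightarrow> x < y \<Longrightarrow> rk V x < rk V y"
proof -
  assume a: "finite V" "x \<in> V" "y \<in> V" "x < y"
  have "{z \<in> V. z \<le> x} \<subset> {z \<in> V. z \<le> y}"
  proof
    show "{z \<in> V. z \<le> x} \<subseteq> {z \<in> V. z \<le> y}" using a by auto
    show "{z \<in> V. z \<le> x} \<noteq> {z \<in> V. z \<le> y}" using a by (metis (mono_tags, lifting) mem_Collect_eq not_le order_refl)
  qed
  then show ?thesis unfolding rk_def using a by (intro psubset_card_mono) auto
qed

lemma rk_emb: "finite V \<Longrightarrow> \<forall>x\<in>V. \<forall>y\<in>V. (x < y) = (rk V x < rk V y)"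
  using rk_less by (metis less_asym linorder_neq_iff)

lemma rk_image: assumes "finite V" shows "rk V ` V = {1..card V}"
proof (rule card_subset_eq)
  show "rk V ` V \<subseteq> {1..card V}"
  proof
    fix z assume "z \<in> rk V ` V"
    then obtain x where x: "x \<in> V" "z = rk V x" by auto
    have "{y \<in> V. y \<le> x} \<noteq> {}" using x by auto
    then have "1 \<le> z" using x assms unfolding rk_def
      by (simp add: Suc_leI card_gt_0_iff)
    moreover have "z \<le> card V" using x assms unfolding rk_def by (simp add: card_mono)
    ultimately show "z \<in> {1..card V}" by simp
  qed
  have "inj_on (rk V) V" using rk_emb[OF assms] by (metis inj_onI linorder_neq_iff)
  then show "card (rk V ` V) = card {1..card V}" by (simp add: card_image)
qed simp

lemma count_rel:
  assumes "finite V" "x \<in> V"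
  shows "card {T \<in> dec_planar_trees V. largest_leaf T \<le> x} = d (card V) (rk V x)"
proof -
  have "1 \<le> rk V x" "rk V x \<le> card V" using rk_image[OF assms(1)] assms(2) by auto
  then show ?thesis unfolding d_def using relabel_card[OF rk_emb[OF assms(1)] assms(2)]
    rk_image[OF assms(1)] by simp
qed


lemma mset_graft:
  assumes "k \<notin> set (labels S)" "distinct (labels T')"
    "k \<in> set (labels T')"
  shows "mset (labels (graft k S T')) = mset (labels T' @ labels S)"
proof -
  have "extr k (graft k S T') = [S]" using extr_graft[OF assms(1,2)] assms(3) by simp
  then show ?thesis using mset_labels_prune[of "graft k S T'" k] by (simp add: prune_graft)
qed

lemma card_P:
  assumes k2: "2 \<le> k" and kn: "k \<le> n"
  shows "card {T \<in> dec_planar_trees {1..n}. largest_leaf T \<le> k - 1}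
    = (\<Sum>A\<in>{A. A \<subseteq> {1..k-1} \<and> A \<noteq> {}}.
         card (dec_planar_trees A) * card {T \<in> dec_planar_trees ({1..n} - A). largest_leaf T \<le> k})"
proof -
  let ?P = "{T \<in> dec_planar_trees {1..n}. largest_leaf T \<le> k - 1}"
  let ?AA = "{A. A \<subseteq> {1..k-1} \<and> A \<noteq> {}}"
  let ?Q = "\<lambda>A. {T \<in> dec_planar_trees ({1..n} - A). largest_leaf T \<le> k}"
  let ?Sig = "Sigma ?AA (\<lambda>A. dec_planar_trees A \<times> ?Q A)"
  define \<phi> where "\<phi> = (\<lambda>(A::nat set, S, T'). graft k S T')"
  define \<psi> where "\<psi> = (\<lambda>T. (set (labels (hd (extr k T))), hd (extr k T), prune k T))"
  have bij: "bij_betw \<phi> ?Sig ?P"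
  proof (rule bij_betw_byWitness[where f'=\<psi>])
    show "\<forall>x\<in>?Sig. \<psi> (\<phi> x) = x"
    proof
      fix x assume "x \<in> ?Sig"
      then obtain A S T' where x: "x = (A, S, T')" "A \<subseteq> {1..k-1}" "A \<noteq> {}"
        "S \<in> dec_planar_trees A" "T' \<in> ?Q A" by auto
      have kS: "k \<notin> set (labels S)"
      proof
        assume "k \<in> set (labels S)"
        then show False using x(2,4) k2 unfolding dec_planar_trees_def by force
      qed
      have dT: "distinct (labels T')" and kT: "k \<in> set (labels T')"
        using x kn k2 by (auto simp: dec_planar_trees_def)
      have "extr k (graft k S T') = [S]" using extr_graft[OF kS dT] kT by simp
      then show "\<psi> (\<phi> x) = x" using x unfolding \<psi>_def \<phi>_def
        by (simp add: prune_graft dec_planar_trees_def)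
    qed
    show "\<forall>T\<in>?P. \<phi> (\<psi> T) = T"
    proof
      fix T assume T: "T \<in> ?P"
      then have "distinct (labels T)" "k \<in> set (labels T)" using kn k2
        by (auto simp: dec_planar_trees_def)
      moreover have "k \<notin> set (leaves T)" using T L_le_iff[of T "k-1"] k2 by auto
      ultimately obtain S where "extr k T = [S]" "graft k S (prune k T) = T"
        using decomp by blast
      then show "\<phi> (\<psi> T) = T" unfolding \<phi>_def \<psi>_def by simp
    qed
    show "\<phi> ` ?Sig \<subseteq> ?P"
    proof
      fix y assume "y \<in> \<phi> ` ?Sig"
      then obtain A S T' where x: "y = graft k S T'" "A \<subseteq> {1..k-1}" "A \<noteq> {}"
        "S \<in> dec_planar_trees A" "T' \<in> ?Q A" unfolding \<phi>_def by auto
      have kS: "k \<notin> set (labels S)"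
      proof
        assume "k \<in> set (labels S)"
        then show False using x(2,4) k2 unfolding dec_planar_trees_def by force
      qed
      have dT: "distinct (labels T')" and kT: "k \<in> set (labels T')"
        using x kn k2 by (auto simp: dec_planar_trees_def)
      have m: "mset (labels y) = mset (labels T' @ labels S)"
        using mset_graft[OF kS dT kT] x by simp
      have sS: "set (labels S) = A" "distinct (labels S)" "decreasing S"
        using x by (auto simp: dec_planar_trees_def)
      have sT: "set (labels T') = {1..n} - A" "decreasing T'" "largest_leaf T' \<le> k"
        using x by (auto simp: dec_planar_trees_def)
      have Sk: "\<forall>u\<in>set (labels S). u < k"
      proof
        fix u assume "u \<in> set (labels S)"
        then have "u \<in> {1..k-1}" using sS(1) x(2) by blast
        then show "u < k" using k2 by auto
      qed
      have d2: "distinct (labels T' @ labels S)" using dT sS sT by auto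
      have "distinct (labels y)" using mset_eq_imp_distinct_iff[OF m] d2 by simp
      moreover have "set (labels y) = {1..n}"
      proof -
        have "A \<subseteq> {1..n}" using kn by (intro subset_trans[OF x(2)]) auto
        then show ?thesis using mset_eq_setD[OF m] sS(1) sT(1) by auto
      qed
      moreover have "decreasing y"
        using x(1) decreasing_graft[OF sT(2) sS(3) Sk] by simp
      moreover have "largest_leaf y \<le> k - 1"
      proof -
        have "\<forall>u\<in>set (leaves T'). u \<le> k" using sT L_le_iff by blast
        moreover have "\<forall>u\<in>set (leaves S). u \<le> k - 1"
          using leaves_sub[of S] Sk by fastforce
        ultimately show ?thesis using leaves_graft[of k S T'] x(1) L_le_iff[of y]
          by fastforce
      qed
      ultimately show "y \<in> ?P" by (simp add: dec_planar_trees_def)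
    qed
    show "\<psi> ` ?P \<subseteq> ?Sig"
    proof
      fix y assume "y \<in> \<psi> ` ?P"
      then obtain T where T: "T \<in> ?P" "y = \<psi> T" by auto
      have dT: "distinct (labels T)" "set (labels T) = {1..n}" "decreasing T"
        "largest_leaf T \<le> k - 1"
        using T by (auto simp: dec_planar_trees_def)
      have kT: "k \<in> set (labels T)" using dT kn k2 by auto
      have "k \<notin> set (leaves T)" using dT L_le_iff[of T "k-1"] k2 by auto
      then obtain S where S: "extr k T = [S]" "graft k S (prune k T) = T"
        using decomp dT kT by blast
      define T' where "T' = prune k T"
      define A where "A = set (labels S)"
      have y: "y = (A, S, T')" using T S unfolding \<psi>_def A_def T'_def by simp
      have m: "mset (labels T) = mset (labels T' @ labels S)"
        using mset_labels_prune[of T k] S unfolding T'_def by simp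
      have d2: "distinct (labels T' @ labels S)"
        using m dT mset_eq_imp_distinct_iff by blast
      have st: "set (labels T) = set (labels T') \<union> A"
        using mset_eq_setD[OF m] unfolding A_def by simp
      have Sp: "decreasing S" "\<forall>u\<in>set (labels S). u < k"
        using extr_props[OF dT(3), of S k] S by auto
      have A1: "A \<subseteq> {1..k-1}" using Sp st dT unfolding A_def by force
      have A2: "A \<noteq> {}" unfolding A_def using labels_ne[of S] by simp
      have "S \<in> dec_planar_trees A" using Sp d2 unfolding A_def dec_planar_trees_def by simp
      moreover have "T' \<in> ?Q A"
      proof -
        have "set (labels T') = {1..n} - A" using st d2 dT unfolding A_def by auto
        moreover have "decreasing T'" using decreasing_prune dT unfolding T'_def by blast
        moreover have "largest_leaf T' \<le> k"
        proof -
          have "\<forall>u\<in>set (leaves T). u \<le> k - 1" using dT L_le_iff by blast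
          then show ?thesis using leaves_prune[of k T] L_le_iff[of T' k]
            unfolding T'_def by fastforce
        qed
        ultimately show ?thesis using d2 by (simp add: dec_planar_trees_def)
      qed
      ultimately show "y \<in> ?Sig" using y A1 A2 by auto
    qed
  qed
  then have "card ?Sig = card ?P" by (rule bij_betw_same_card)
  then have "card ?P = card ?Sig" by (rule sym)
  also have "\<dots> = (\<Sum>A\<in>?AA. card (dec_planar_trees A \<times> ?Q A))"
  proof (rule card_SigmaI)
    show "finite ?AA" by (rule finite_subset[of _ "Pow {1..k-1}"]) auto
    show "\<forall>A\<in>?AA. finite (dec_planar_trees A \<times> ?Q A)"
    proof
      fix A assume "A \<in> ?AA"
      then have "A \<subseteq> {1..k-1}" by simp
      then have "finite A" by (rule finite_subset) simp
      then have "finite (dec_planar_trees A)" "finite (dec_planar_trees ({1..n} - A))"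
        using finite_dec by auto
      then show "finite (dec_planar_trees A \<times> ?Q A)" by simp
    qed
  qed
  also have "\<dots> = (\<Sum>A\<in>?AA. card (dec_planar_trees A) * card (?Q A))"
    by (simp add: card_cartesian_product)
  finally show ?thesis .
qed


lemma sum_subsets:
  fixes g :: "nat \<Rightarrow> nat"
  shows "(\<Sum>A\<in>{A. A \<subseteq> {1..m} \<and> A \<noteq> {}}. g (card A)) = (\<Sum>a = 1..m. (m choose a) * g a)"
proof -
  let ?F = "\<lambda>a::nat. {A. A \<subseteq> {1..m} \<and> card A = a}"
  have eq: "{A. A \<subseteq> {1..m} \<and> A \<noteq> {}} = (\<Union>a\<in>{1..m}. ?F a)"
  proof (intro equalityI subsetI)
    fix A assume A: "A \<in> {A. A \<subseteq> {1..m} \<and> A \<noteq> {}}"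
    then have "finite A" using finite_subset by auto
    then have "1 \<le> card A" using A by (simp add: Suc_leI card_gt_0_iff)
    moreover have "card A \<le> m" using A card_mono[of "{1..m}" A] by simp
    ultimately show "A \<in> (\<Union>a\<in>{1..m}. ?F a)" using A by auto
  next
    fix A assume "A \<in> (\<Union>a\<in>{1..m}. ?F a)"
    then show "A \<in> {A. A \<subseteq> {1..m} \<and> A \<noteq> {}}" by auto
  qed
  have fin: "\<forall>a\<in>{1..m}. finite (?F a)"
  proof
    fix a
    have "?F a \<subseteq> Pow {1..m}" by auto
    then show "finite (?F a)" by (rule finite_subset) simp
  qed
  have "(\<Sum>A\<in>{A. A \<subseteq> {1..m} \<and> A \<noteq> {}}. g (card A)) = (\<Sum>a\<in>{1..m}. \<Sum>A\<in>?F a. g (card A))"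
    unfolding eq by (rule sum.UNION_disjoint) (use fin in auto)
  also have "\<dots> = (\<Sum>a\<in>{1..m}. \<Sum>A\<in>?F a. g a)"
    by (intro sum.cong) auto
  also have "\<dots> = (\<Sum>a = 1..m. (m choose a) * g a)"
    using n_subsets[of "{1..m}"] by simp
  finally show ?thesis .
qed

lemma card_decA:
  assumes "finite A" "A \<noteq> {}"
  shows "card (dec_planar_trees A) = d (card A) (card A)"
proof -
  have "dec_planar_trees A = {T \<in> dec_planar_trees A. largest_leaf T \<le> Max A}"
  proof (intro equalityI subsetI)
    fix T assume T: "T \<in> dec_planar_trees A"
    then have "largest_leaf T \<in> A" using L_mem leaves_sub
      unfolding dec_planar_trees_def by blast
    then show "T \<in> {T \<in> dec_planar_trees A. largest_leaf T \<le> Max A}"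
      using T assms by simp
  qed auto
  moreover have "rk A (Max A) = card A"
  proof -
    have "{y \<in> A. y \<le> Max A} = A" using assms by auto
    then show ?thesis unfolding rk_def by simp
  qed
  ultimately show ?thesis using count_rel[of A "Max A"] assms by simp
qed

lemma card_QA:
  assumes A: "A \<subseteq> {1..k-1}" and k2: "2 \<le> k" and kn: "k \<le> n"
  shows "card {T \<in> dec_planar_trees ({1..n} - A). largest_leaf T \<le> k} = d (n - card A) (k - card A)"
proof -
  let ?V = "{1..n} - A"
  have fA: "finite A" using A finite_subset by blast
  have An: "A \<subseteq> {1..n}" using kn by (intro subset_trans[OF A]) auto
  have kV: "k \<in> ?V" using A k2 kn by auto
  have cV: "card ?V = n - card A" using An by (simp add: card_Diff_subset fA)
  have "{y \<in> ?V. y \<le> k} = {1..k} - A" using kn by auto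
  moreover have "A \<subseteq> {1..k}" by (intro subset_trans[OF A]) auto
  ultimately have "rk ?V k = k - card A" unfolding rk_def by (simp add: card_Diff_subset fA)
  then show ?thesis using count_rel[of ?V k] kV cV by simp
qed

theorem lemma11p2:
  fixes n k :: nat
  assumes "2 \<le> k" and "k \<le> n"
  shows "d n (k - 1) =
         (\<Sum>a = 1..k - 1. ((k - 1) choose a) * d a a * d (n - a) (k - a))"
proof -
  have "d n (k - 1) = card {T \<in> dec_planar_trees {1..n}. largest_leaf T \<le> k - 1}"
  proof -
    have "1 \<le> k - 1" "k - 1 \<le> n" using assms by auto
    then show ?thesis unfolding d_def by simp
  qed
  also have "\<dots> = (\<Sum>A\<in>{A. A \<subseteq> {1..k-1} \<and> A \<noteq> {}}.
         card (dec_planar_trees A) * card {T \<in> dec_planar_trees ({1..n} - A). largest_leaf T \<le> k})"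
    by (rule card_P[OF assms])
  also have "\<dots> = (\<Sum>A\<in>{A. A \<subseteq> {1..k-1} \<and> A \<noteq> {}}.
         (\<lambda>a. d a a * d (n - a) (k - a)) (card A))"
  proof (rule sum.cong)
    fix A assume A: "A \<in> {A. A \<subseteq> {1..k-1} \<and> A \<noteq> {}}"
    then have fA: "finite A" using finite_subset by auto
    show "card (dec_planar_trees A) * card {T \<in> dec_planar_trees ({1..n} - A). largest_leaf T \<le> k}
        = (\<lambda>a. d a a * d (n - a) (k - a)) (card A)"
      using card_decA[OF fA] card_QA[of A k n] A assms by simp
  qed simp
  also have "\<dots> = (\<Sum>a = 1..k - 1. ((k - 1) choose a) * (d a a * d (n - a) (k - a)))"
    by (rule sum_subsets)
  finally show ?thesis by (simp add: mult.assoc)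
qed

end
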